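(* Let $m$ be a positive integer and let $h_{r,d},h_{r,u}$ be independent random variables such that each of $|h_{r,d}|^2,|h_{r,u}|^2$ has density $f(x)=\frac{m^m}{\Gamma(m)}x^{m-1}e^{-mx}$, $x>0$; put $Z=|h_{r,d}|^2|h_{r,u}|^2$. Let $\delta,T,\Xi_{r,1},d_t,\alpha_r$ be positive constants and define $R_{est}:=\frac{\delta}{2T}\,\mathbb{E}\big[\log_2(1+\Xi_{r,1}d_t^{-\alpha_r}Z)\big]$. Then $$R_{est}=\sum_{k=0}^{m-1}\frac{\delta}{2T\ln 2}\int_0^\infty\exp\!\Big(\frac{m d_t^{\alpha_r}}{\Xi_{r,1}x}\Big)E_{k+1}\!\Big(\frac{m d_t^{\alpha_r}}{\Xi_{r,1}x}\Big)f(x)\,dx,$$ where $E_n(y)=\int_1^\infty e^{-yt}t^{-n}\,dt$ is the generalized exponential integral.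
   Context: $R_{est}$ is the ergodic radar estimation information rate: $\delta$ is the radar duty factor, $T$ the pulse duration, $d_t$ the BS–target distance, $\alpha_r$ the radar path loss exponent, $|h_{r,d}|^2,|h_{r,u}|^2$ the unit-mean Nakagami-$m$ power gains of the downlink and reflected links, and $\Xi_{r,1}d_t^{-\alpha_r}Z$ plays the role of $2T\beta_{semi}B\gamma_r^{echo}$ in the rate bound $\frac{\delta}{2T}\log_2(1+2T\beta_{semi}B\gamma_r^{echo})$. *)

theory Defs
  imports "HOL-Probability.Probability"
begin

definition nak_pdf :: "nat \<Rightarrow> real \<Rightarrow> real" where
  "nak_pdf m x = (if x > 0 then (real m) ^ m / Gamma (real m) * x ^ (m - 1) * exp (- real m * x) else 0)"

definition gen_expint :: "nat \<Rightarrow> real \<Rightarrow> real" where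
  "gen_expint n y = (LINT t:{1..}|lborel. exp (- y * t) * t powr (- real n))"

end

theory Submission imports Defs begin

lemma nak_meas[measurable]: "nak_pdf m \<in> borel_measurable borel"
  unfolding nak_pdf_def[abs_def] by measurable

lemma gen_expint_meas[measurable]: "gen_expint n \<in> borel_measurable borel"
proof -
  have "gen_expint n = (\<lambda>y. LINT t|lborel. indicator {1..} t *\<^sub>R (exp (- y * t) * t powr (- real n)))"
    unfolding gen_expint_def[abs_def] set_lebesgue_integral_def by simp
  also have "\<dots> \<in> borel_measurable borel" by measurable
  finally show ?thesis .
qed

lemma nak_nonneg: "0 \<le> nak_pdf m x"
proof (cases "m = 0")
  case False
  then show ?thesis unfolding nak_pdf_def by (auto intro!: divide_nonneg_pos Gamma_real_pos)
qed (simp add: nak_pdf_def)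

lemma nak_zero: "x \<le> 0 \<Longrightarrow> nak_pdf m x = 0"
  unfolding nak_pdf_def by auto

lemma nak_erlang: assumes "m > 0" "x > 0"
  shows "nak_pdf m x = erlang_density (m - 1) (real m) x"
proof -
  have "real m = 1 + of_nat (m - 1)" using assms by auto
  then have G: "Gamma (real m) = fact (m - 1)" by (metis Gamma_fact)
  have "Suc (m - 1) = m" using assms by auto
  then show ?thesis using assms unfolding nak_pdf_def erlang_density_def G by simp
qed

lemma nak_AE: assumes "m > 0"
  shows "AE x in lborel. ennreal (nak_pdf m x * g x) = ennreal (erlang_density (m - 1) (real m) x * g x)"
  using AE_lborel_singleton[of 0]
  by eventually_elim (auto simp: nak_erlang[OF assms] nak_zero erlang_density_def
     dest!: not_less[THEN iffD1] order.not_eq_order_implies_strict)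

lemma nak_total: assumes "m > 0" shows "(\<integral>\<^sup>+ y. ennreal (nak_pdf m y) \<partial>lborel) = 1"
proof -
  have "(\<integral>\<^sup>+ y. ennreal (nak_pdf m y) \<partial>lborel) = (\<integral>\<^sup>+ y. ennreal (nak_pdf m y * 1) \<partial>lborel)" by simp
  also have "\<dots> = (\<integral>\<^sup>+ y. ennreal (erlang_density (m - 1) (real m) y * y ^ 0) \<partial>lborel)"
    by (rule nn_integral_cong_AE) (use nak_AE[OF assms, of "\<lambda>_. 1"] in simp)
  also have "\<dots> = 1" using assms by (subst nn_integral_erlang_ith_moment) auto
  finally show ?thesis .
qed

lemma nak_moment: assumes "m > 0" shows "(\<integral>\<^sup>+ y. ennreal (nak_pdf m y * y) \<partial>lborel) = 1"
proof -
  have "(\<integral>\<^sup>+ y. ennreal (nak_pdf m y * y) \<partial>lborel) = (\<integral>\<^sup>+ y. ennreal (erlang_density (m - 1) (real m) y * y ^ 1) \<partial>lborel)"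
    by (rule nn_integral_cong_AE) (use nak_AE[OF assms, of "\<lambda>y. y"] in simp)
  also have "\<dots> = fact (m - 1 + 1) / (fact (m - 1) * real m ^ 1)" using assms by (subst nn_integral_erlang_ith_moment) auto
  also have "\<dots> = 1"
  proof -
    have "m - 1 + 1 = Suc (m - 1)" "m = Suc (m - 1)" using assms by auto
    then have "fact (m - 1 + 1) = (real m * fact (m - 1) :: real)" by (metis fact_Suc of_nat_fact of_nat_mult)
    then show ?thesis using assms by simp
  qed
  finally show ?thesis .
qed

lemma nak_laplace: assumes "m > 0" "s \<ge> 0"
  shows "(\<integral>\<^sup>+ y. ennreal (nak_pdf m y * exp (- (s * real m) * y)) \<partial>lborel) = ennreal (1 / (1 + s) ^ m)"
proof -
  define l where "l = real m * (1 + s)"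
  have l: "l > 0" using assms by (auto simp: l_def)
  have eq: "erlang_density (m - 1) (real m) y * exp (- (s * real m) * y) = 1 / (1 + s) ^ m * erlang_density (m - 1) l y" for y
  proof -
    have S: "Suc (m - 1) = m" using assms by auto
    have "exp (- real m * y) * exp (- (s * real m) * y) = exp (- l * y)"
      unfolding l_def mult_exp_exp by (simp add: algebra_simps)
    moreover have "l ^ m = real m ^ m * (1 + s) ^ m" by (simp add: l_def power_mult_distrib)
    ultimately show ?thesis using assms unfolding erlang_density_def S
      by (auto simp: field_simps)
  qed
  have "(\<integral>\<^sup>+ y. ennreal (nak_pdf m y * exp (- (s * real m) * y)) \<partial>lborel)
     = (\<integral>\<^sup>+ y. ennreal (1 / (1 + s) ^ m) * ennreal (erlang_density (m - 1) l y * y ^ 0) \<partial>lborel)"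
  proof (rule nn_integral_cong_AE)
    show "AE y in lborel. ennreal (nak_pdf m y * exp (- (s * real m) * y)) = ennreal (1 / (1 + s) ^ m) * ennreal (erlang_density (m - 1) l y * y ^ 0)"
      using nak_AE[OF assms(1), of "\<lambda>y. exp (- (s * real m) * y)"]
    proof eventually_elim
      case (elim y)
      have "0 \<le> 1 / (1 + s) ^ m" using assms by simp
      then show ?case unfolding elim eq power_0 mult_1_right by (rule ennreal_mult')
    qed
  qed
  also have "\<dots> = ennreal (1 / (1 + s) ^ m)"
    using l nn_integral_erlang_ith_moment[OF l, of "m - 1" 0] by (subst nn_integral_cmult) auto
  finally show ?thesis .
qed

lemma hi_nn:
  fixes f :: "real \<Rightarrow> real"
  assumes "(f has_integral I) S" "S \<in> sets borel" "f \<in> borel_measurable borel" "\<And>x. x \<in> S \<Longrightarrow> 0 \<le> f x"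
  shows "(\<integral>\<^sup>+x. ennreal (indicator S x * f x) \<partial>lborel) = ennreal I"
proof -
  have eq: "(\<lambda>x. indicator S x * f x) = (\<lambda>x. if x \<in> S then f x else 0)"
    by (auto simp: indicator_def)
  have "((\<lambda>x. indicator S x * f x) has_integral I) UNIV"
    unfolding eq using assms(1) by (simp add: has_integral_restrict_UNIV)
  moreover have "(\<lambda>x. indicator S x * f x) \<in> borel_measurable borel"
    using assms(2,3) by measurable
  ultimately show ?thesis
    by (intro nn_integral_has_integral_lborel) (auto simp: indicator_def assms(4))
qed

lemma P2: assumes "l > (0::real)"
  shows "(\<integral>\<^sup>+s. ennreal (indicator {0<..} s * exp (- l * s)) \<partial>lborel) = ennreal (1 / l)"
proof -
  have "(\<integral>\<^sup>+s. ennreal (indicator {0<..} s * exp (- l * s)) \<partial>lborel)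
      = (\<integral>\<^sup>+s. ennreal (indicator {0..} s * exp (- l * s)) \<partial>lborel)"
    by (rule nn_integral_cong_AE) (use AE_lborel_singleton[of 0] in \<open>auto elim!: eventually_mono simp: indicator_def\<close>)
  also have "\<dots> = ennreal (1 / l)"
    using has_integral_exp_minus_to_infinity[OF assms, of 0]
    by (intro hi_nn) auto
  finally show ?thesis .
qed

lemma P1: assumes "s > (0::real)" "z \<ge> 0"
  shows "(\<integral>\<^sup>+u. ennreal (indicator {0..z} u * exp (- s * u)) \<partial>lborel) = ennreal ((1 - exp (- s * z)) / s)"
proof -
  have "((\<lambda>u. exp (- s * u)) has_integral ((\<lambda>u. - exp (- s * u) / s) z - (\<lambda>u. - exp (- s * u) / s) 0)) {0..z}"
  proof (rule fundamental_theorem_of_calculus)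
    fix x assume "x \<in> {0..z}"
    show "((\<lambda>u. - exp (- s * u) / s) has_vector_derivative exp (- s * x)) (at x within {0..z})"
      unfolding has_real_derivative_iff_has_vector_derivative[symmetric]
      using assms by (auto intro!: derivative_eq_intros)
  qed (use assms in auto)
  then have "((\<lambda>u. exp (- s * u)) has_integral ((1 - exp (- s * z)) / s)) {0..z}"
    using assms by (simp add: field_simps)
  then show ?thesis by (intro hi_nn) auto
qed

lemma P3: assumes "b > (0::real)" "z \<ge> 0"
  shows "(\<integral>\<^sup>+u. ennreal (indicator {0..z} u * (1 / (b + u))) \<partial>lborel) = ennreal (ln (b + z) - ln b)"
proof -
  have "((\<lambda>u. 1 / (b + u)) has_integral ((\<lambda>u. ln (b + u)) z - (\<lambda>u. ln (b + u)) 0)) {0..z}"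
  proof (rule fundamental_theorem_of_calculus)
    fix x assume "x \<in> {0..z}"
    then show "((\<lambda>u. ln (b + u)) has_vector_derivative 1 / (b + x)) (at x within {0..z})"
      unfolding has_real_derivative_iff_has_vector_derivative[symmetric]
      using assms by (auto intro!: derivative_eq_intros)
  qed (use assms in auto)
  then show ?thesis using assms by (intro hi_nn) auto
qed

lemma F1: assumes "b > (0::real)" "z \<ge> 0"
  shows "(\<integral>\<^sup>+s. ennreal (indicator {0<..} s * (exp (- b * s) * ((1 - exp (- s * z)) / s))) \<partial>lborel)
    = ennreal (ln (b + z) - ln b)"
proof -
  have "(\<integral>\<^sup>+s. ennreal (indicator {0<..} s * (exp (- b * s) * ((1 - exp (- s * z)) / s))) \<partial>lborel)
     = (\<integral>\<^sup>+s. \<integral>\<^sup>+u. ennreal (indicator {0<..} s * indicator {0..z} u * exp (- (b + u) * s)) \<partial>lborel \<partial>lborel)"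
  proof (rule nn_integral_cong)
    fix s :: real
    show "ennreal (indicator {0<..} s * (exp (- b * s) * ((1 - exp (- s * z)) / s)))
      = (\<integral>\<^sup>+u. ennreal (indicator {0<..} s * indicator {0..z} u * exp (- (b + u) * s)) \<partial>lborel)"
    proof (cases "s > 0")
      case True
      have "(\<integral>\<^sup>+u. ennreal (indicator {0<..} s * indicator {0..z} u * exp (- (b + u) * s)) \<partial>lborel)
         = (\<integral>\<^sup>+u. ennreal (exp (- b * s)) * ennreal (indicator {0..z} u * exp (- s * u)) \<partial>lborel)"
        using True by (intro nn_integral_cong) (auto simp: ennreal_mult'[symmetric] algebra_simps mult_exp_exp)
      also have "\<dots> = ennreal (exp (- b * s)) * ennreal ((1 - exp (- s * z)) / s)"
        using True assms P1[of s z] by (subst nn_integral_cmult) auto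
      also have "\<dots> = ennreal (indicator {0<..} s * (exp (- b * s) * ((1 - exp (- s * z)) / s)))"
        using True by (simp add: ennreal_mult'[symmetric] times_divide_eq_right)
      finally show ?thesis ..
    qed simp
  qed
  also have "\<dots> = (\<integral>\<^sup>+u. \<integral>\<^sup>+s. ennreal (indicator {0<..} s * indicator {0..z} u * exp (- (b + u) * s)) \<partial>lborel \<partial>lborel)"
    by (rule lborel_pair.Fubini') measurable
  also have "\<dots> = (\<integral>\<^sup>+u. ennreal (indicator {0..z} u * (1 / (b + u))) \<partial>lborel)"
  proof (rule nn_integral_cong)
    fix u :: real
    show "(\<integral>\<^sup>+s. ennreal (indicator {0<..} s * indicator {0..z} u * exp (- (b + u) * s)) \<partial>lborel)
       = ennreal (indicator {0..z} u * (1 / (b + u)))"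
    proof (cases "u \<in> {0..z}")
      case True
      then have "b + u > 0" using assms by auto
      with True show ?thesis using P2[of "b + u"] by simp
    qed simp
  qed
  also have "\<dots> = ennreal (ln (b + z) - ln b)" using P3[OF assms] .
  finally show ?thesis .
qed

lemma P4: assumes "b > (0::real)"
  shows "(\<integral>\<^sup>+s. ennreal (indicator {0<..} s * (exp (- b * s) / (1 + s) ^ n)) \<partial>lborel)
    = ennreal (exp b * gen_expint n b)"
proof -
  define Q where "Q = (\<integral>\<^sup>+s. ennreal (indicator {0<..} s * (exp (- b * s) / (1 + s) ^ n)) \<partial>lborel)"
  have "Q \<le> (\<integral>\<^sup>+s. ennreal (indicator {0<..} s * exp (- b * s)) \<partial>lborel)"
    unfolding Q_def
  proof (intro nn_integral_mono)
    fix s :: real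
    show "ennreal (indicator {0<..} s * (exp (- b * s) / (1 + s) ^ n)) \<le> ennreal (indicator {0<..} s * exp (- b * s))"
    proof (cases "s > 0")
      case True
      have "1 \<le> (1 + s) ^ n" using True by (intro one_le_power) auto
      then have "exp (- b * s) / (1 + s) ^ n \<le> exp (- b * s)"
        by (simp add: divide_le_eq mult_le_cancel_left1)
      with True show ?thesis by (auto intro!: ennreal_leI)
    qed simp
  qed
  also have "\<dots> = ennreal (1 / b)" using P2[OF assms] .
  finally have Qfin: "Q < top" using order.strict_trans1 by fastforce
  define g where "g = (\<lambda>t. ennreal (indicator {1..} t * (exp (- b * t) * t powr (- real n))))"
  have gm: "g \<in> borel_measurable borel" unfolding g_def by measurable
  have "gen_expint n b = (LINT t|lborel. indicator {1..} t * (exp (- b * t) * t powr (- real n)))"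
    unfolding gen_expint_def set_lebesgue_integral_def by simp
  also have "\<dots> = enn2real (integral\<^sup>N lborel g)"
    unfolding g_def by (rule integral_eq_nn_integral) (auto simp: indicator_def)
  also have "integral\<^sup>N lborel g = (\<integral>\<^sup>+s. g (1 + 1 * s) \<partial>lborel)"
    using nn_integral_real_affine[OF gm, of 1 1] by simp
  also have "(\<integral>\<^sup>+s. g (1 + 1 * s) \<partial>lborel) = (\<integral>\<^sup>+s. ennreal (exp (- b)) * ennreal (indicator {0<..} s * (exp (- b * s) / (1 + s) ^ n)) \<partial>lborel)"
  proof (rule nn_integral_cong_AE)
    show "AE s in lborel. g (1 + 1 * s) = ennreal (exp (- b)) * ennreal (indicator {0<..} s * (exp (- b * s) / (1 + s) ^ n))"
      using AE_lborel_singleton[of 0]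
    proof eventually_elim
      case (elim s)
      show ?case
      proof (cases "s > 0")
        case True
        have "(1 + s) powr (- real n) = 1 / (1 + s) ^ n"
          using True by (simp add: powr_minus powr_realpow divide_inverse)
        moreover have "exp (- b * (1 + s)) = exp (- b) * exp (- b * s)"
          by (simp add: algebra_simps mult_exp_exp)
        ultimately show ?thesis using True unfolding g_def
          by (simp add: ennreal_mult'[symmetric])
      next
        case False
        then have "s < 0" using elim by auto
        then show ?thesis unfolding g_def by simp
      qed
    qed
  qed
  also have "\<dots> = ennreal (exp (- b)) * Q"
    unfolding Q_def by (rule nn_integral_cmult) measurable
  finally have "gen_expint n b = exp (- b) * enn2real Q"
    by (simp add: enn2real_mult)
  then have "exp b * gen_expint n b = enn2real Q" by (simp add: mult_exp_exp)
  then show ?thesis using Qfin unfolding Q_def[symmetric] by simp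
qed

lemma gen_expint_nonneg: "0 \<le> gen_expint n y"
  unfolding gen_expint_def set_lebesgue_integral_def
  by (rule Bochner_Integration.integral_nonneg) (auto simp: indicator_def)

lemma geo_aux: assumes "s > (0::real)"
  shows "s * (\<Sum>k<m. 1 / (1 + s) ^ (k + 1)) = 1 - 1 / (1 + s) ^ m"
proof (induction m)
  case (Suc m)
  have p: "(1 + s) ^ m > 0" using assms by simp
  have "s * (\<Sum>k<Suc m. 1 / (1 + s) ^ (k + 1)) = s / (1 + s) ^ (m + 1) + (1 - 1 / (1 + s) ^ m)"
    using Suc by (simp add: distrib_left)
  also have "\<dots> = 1 - 1 / (1 + s) ^ Suc m"
  proof -
    have q: "(1 + s) ^ (m + 1) = (1 + s) * (1 + s) ^ m" by simp
    have "s / (1 + s) ^ (m + 1) - 1 / (1 + s) ^ m = - 1 / (1 + s) ^ (m + 1)"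
    proof -
      define q where "q = (1 + s) ^ m"
      have "q > 0" using p by (simp add: q_def)
      have "s / ((1 + s) * q) - 1 / q = (s - (1 + s)) / ((1 + s) * q)"
      proof -
        have e: "1 / q = (1 + s) / ((1 + s) * q)" using assms \<open>q > 0\<close> by simp
        show ?thesis by (simp only: e diff_divide_distrib)
      qed
      then show ?thesis unfolding q q_def[symmetric] by simp
    qed
    then show ?thesis by simp
  qed
  finally show ?case .
qed simp

lemma geo: assumes "s > (0::real)"
  shows "(1 - 1 / (1 + s) ^ m) / s = (\<Sum>k<m. 1 / (1 + s) ^ (k + 1))"
  using geo_aux[OF assms, of m] assms by (simp add: field_simps)

lemma K: assumes m: "m > 0" and b: "b > (0::real)"
  shows "(\<integral>\<^sup>+y. ennreal (nak_pdf m y * ln (1 + real m * y / b)) \<partial>lborel)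
    = ennreal (\<Sum>k<m. exp b * gen_expint (k + 1) b)"
proof -
  let ?f = "nak_pdf m"
  have "(\<integral>\<^sup>+y. ennreal (?f y * ln (1 + real m * y / b)) \<partial>lborel)
     = (\<integral>\<^sup>+y. \<integral>\<^sup>+s. ennreal (?f y * (indicator {0<..} s * (exp (- b * s) * ((1 - exp (- s * (real m * y))) / s)))) \<partial>lborel \<partial>lborel)"
  proof (rule nn_integral_cong)
    fix y :: real
    show "ennreal (?f y * ln (1 + real m * y / b))
      = (\<integral>\<^sup>+s. ennreal (?f y * (indicator {0<..} s * (exp (- b * s) * ((1 - exp (- s * (real m * y))) / s)))) \<partial>lborel)"
    proof (cases "y > 0")
      case True
      have z: "real m * y \<ge> 0" using True by simp
      have "ln (1 + real m * y / b) = ln (b + real m * y) - ln b"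
      proof -
        have "1 + real m * y / b = (b + real m * y) / b" using b by (simp add: field_simps)
        then show ?thesis using b z by (simp add: ln_div)
      qed
      then have "ennreal (?f y * ln (1 + real m * y / b)) = ennreal (?f y) * ennreal (ln (b + real m * y) - ln b)"
        by (simp add: ennreal_mult' nak_nonneg)
      also have "\<dots> = ennreal (?f y) * (\<integral>\<^sup>+s. ennreal (indicator {0<..} s * (exp (- b * s) * ((1 - exp (- s * (real m * y))) / s))) \<partial>lborel)"
        using F1[OF b z] by simp
      also have "\<dots> = (\<integral>\<^sup>+s. ennreal (?f y) * ennreal (indicator {0<..} s * (exp (- b * s) * ((1 - exp (- s * (real m * y))) / s))) \<partial>lborel)"
        by (rule nn_integral_cmult[symmetric]) measurable
      also have "\<dots> = (\<integral>\<^sup>+s. ennreal (?f y * (indicator {0<..} s * (exp (- b * s) * ((1 - exp (- s * (real m * y))) / s)))) \<partial>lborel)"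
        by (intro nn_integral_cong) (simp add: ennreal_mult'[symmetric] nak_nonneg)
      finally show ?thesis .
    qed (simp add: nak_zero)
  qed
  also have "\<dots> = (\<integral>\<^sup>+s. \<integral>\<^sup>+y. ennreal (?f y * (indicator {0<..} s * (exp (- b * s) * ((1 - exp (- s * (real m * y))) / s)))) \<partial>lborel \<partial>lborel)"
    by (rule lborel_pair.Fubini'[symmetric]) measurable
  also have "\<dots> = (\<integral>\<^sup>+s. (\<Sum>k<m. ennreal (indicator {0<..} s * (exp (- b * s) / (1 + s) ^ (k + 1)))) \<partial>lborel)"
  proof (rule nn_integral_cong)
    fix s :: real
    show "(\<integral>\<^sup>+y. ennreal (?f y * (indicator {0<..} s * (exp (- b * s) * ((1 - exp (- s * (real m * y))) / s)))) \<partial>lborel)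
      = (\<Sum>k<m. ennreal (indicator {0<..} s * (exp (- b * s) / (1 + s) ^ (k + 1))))"
    proof (cases "s > 0")
      case True
      define L where "L = 1 / (1 + s) ^ m"
      have L: "0 \<le> L" "L \<le> 1" using True by (auto simp: L_def)
      define X where "X = (\<integral>\<^sup>+y. ennreal (?f y * (1 - exp (- s * (real m * y)))) \<partial>lborel)"
      have "X + ennreal L = (\<integral>\<^sup>+y. ennreal (?f y * (1 - exp (- s * (real m * y)))) + ennreal (?f y * exp (- (s * real m) * y)) \<partial>lborel)"
        unfolding X_def L_def using nak_laplace[OF m, of s] True
        by (subst nn_integral_add) auto
      also have "\<dots> = (\<integral>\<^sup>+y. ennreal (?f y) \<partial>lborel)"
      proof (rule nn_integral_cong)
        fix y :: real
        show "ennreal (?f y * (1 - exp (- s * (real m * y)))) + ennreal (?f y * exp (- (s * real m) * y)) = ennreal (?f y)"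
        proof (cases "y > 0")
          case True
          then have "exp (- s * (real m * y)) \<le> 1" using \<open>s > 0\<close> by simp
          then show ?thesis using nak_nonneg[of m y]
            by (subst ennreal_plus[symmetric]) (auto simp: algebra_simps intro!: mult_left_le)
        qed (simp add: nak_zero)
      qed
      also have "\<dots> = 1" using nak_total[OF m] .
      finally have "X = 1 - ennreal L"
        by (metis ennreal_add_diff_cancel_right ennreal_neq_top)
      then have X: "X = ennreal (1 - L)" using L by (simp add: ennreal_minus[symmetric])
      have "(\<integral>\<^sup>+y. ennreal (?f y * (indicator {0<..} s * (exp (- b * s) * ((1 - exp (- s * (real m * y))) / s)))) \<partial>lborel)
        = (\<integral>\<^sup>+y. ennreal (exp (- b * s) / s) * ennreal (?f y * (1 - exp (- s * (real m * y)))) \<partial>lborel)"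
        using True by (intro nn_integral_cong) (simp add: ennreal_mult'[symmetric] field_simps)
      also have "\<dots> = ennreal (exp (- b * s) / s) * ennreal (1 - L)"
        unfolding X[symmetric] X_def by (rule nn_integral_cmult) measurable
      also have "\<dots> = ennreal (exp (- b * s) * ((1 - L) / s))"
        using True by (simp add: ennreal_mult'[symmetric])
      also have "\<dots> = ennreal (\<Sum>k<m. exp (- b * s) / (1 + s) ^ (k + 1))"
        unfolding L_def geo[OF True] by (simp add: sum_distrib_left)
      also have "\<dots> = (\<Sum>k<m. ennreal (indicator {0<..} s * (exp (- b * s) / (1 + s) ^ (k + 1))))"
        using True by (subst sum_ennreal[symmetric]) (auto intro!: divide_nonneg_pos)
      finally show ?thesis .
    qed simp
  qed
  also have "\<dots> = (\<Sum>k<m. \<integral>\<^sup>+s. ennreal (indicator {0<..} s * (exp (- b * s) / (1 + s) ^ (k + 1))) \<partial>lborel)"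
    by (rule nn_integral_sum) measurable
  also have "\<dots> = (\<Sum>k<m. ennreal (exp b * gen_expint (k + 1) b))"
    by (intro sum.cong refl P4[OF b])
  also have "\<dots> = ennreal (\<Sum>k<m. exp b * gen_expint (k + 1) b)"
    by (rule sum_ennreal) (simp add: gen_expint_nonneg)
  finally show ?thesis .
qed

lemma log2_nonneg: "0 \<le> (t::real) \<Longrightarrow> 0 \<le> log 2 (1 + t)"
  by (subst zero_le_log_cancel_iff) auto

lemma B: assumes m: "m > 0" and b: "b > (0::real)"
  shows "(\<integral>\<^sup>+y. ennreal (nak_pdf m y * ln (1 + real m * y / b)) \<partial>lborel) \<le> ennreal (real m / b)"
proof -
  have "(\<integral>\<^sup>+y. ennreal (nak_pdf m y * ln (1 + real m * y / b)) \<partial>lborel)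
     \<le> (\<integral>\<^sup>+y. ennreal (real m / b) * ennreal (nak_pdf m y * y) \<partial>lborel)"
  proof (rule nn_integral_mono)
    fix y :: real
    show "ennreal (nak_pdf m y * ln (1 + real m * y / b)) \<le> ennreal (real m / b) * ennreal (nak_pdf m y * y)"
    proof (cases "y > 0")
      case True
      have "ln (1 + real m * y / b) \<le> real m * y / b"
        using True b by (intro ln_add_one_self_le_self) auto
      then have "nak_pdf m y * ln (1 + real m * y / b) \<le> real m / b * (nak_pdf m y * y)"
      proof -
        have "nak_pdf m y * ln (1 + real m * y / b) \<le> nak_pdf m y * (real m * y / b)"
          using nak_nonneg[of m y] \<open>ln (1 + real m * y / b) \<le> real m * y / b\<close> by (rule mult_left_mono[rotated])
        also have "\<dots> = real m / b * (nak_pdf m y * y)" by simp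
        finally show ?thesis .
      qed
      then show ?thesis using b by (simp add: ennreal_mult'[symmetric] ennreal_leI)
    qed (simp add: nak_zero)
  qed
  also have "\<dots> = ennreal (real m / b)"
    using nak_moment[OF m] by (subst nn_integral_cmult) auto
  finally show ?thesis .
qed

theorem corollary1:
  fixes M :: "'a measure" and m :: nat
    and hd hu :: "'a \<Rightarrow> complex"
    and \<delta> T \<Xi> dt \<alpha> :: real
  assumes "prob_space M"
    and "m > 0"
    and "hd \<in> borel_measurable M" and "hu \<in> borel_measurable M"
    and "prob_space.indep_var M borel hd borel hu"
    and "distributed M lborel (\<lambda>\<omega>. (cmod (hd \<omega>))\<^sup>2) (\<lambda>x. ennreal (nak_pdf m x))"
    and "distributed M lborel (\<lambda>\<omega>. (cmod (hu \<omega>))\<^sup>2) (\<lambda>x. ennreal (nak_pdf m x))"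
    and "\<delta> > 0" and "T > 0" and "\<Xi> > 0" and "dt > 0" and "\<alpha> > 0"
  shows "\<delta> / (2 * T) * prob_space.expectation M
           (\<lambda>\<omega>. log 2 (1 + \<Xi> * dt powr (- \<alpha>) * ((cmod (hd \<omega>))\<^sup>2 * (cmod (hu \<omega>))\<^sup>2)))
       = (\<Sum>k<m. \<delta> / (2 * T * ln 2) *
           (LINT x:{0<..}|lborel.
              exp (real m * dt powr \<alpha> / (\<Xi> * x)) *
              gen_expint (k + 1) (real m * dt powr \<alpha> / (\<Xi> * x)) * nak_pdf m x))"
proof -
  interpret P: prob_space M by fact
  have m: "m > 0" by fact
  define X where "X = (\<lambda>\<omega>. (cmod (hd \<omega>))\<^sup>2)"
  define Y where "Y = (\<lambda>\<omega>. (cmod (hu \<omega>))\<^sup>2)"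
  define f where "f = nak_pdf m"
  define a where "a = \<Xi> * dt powr (- \<alpha>)"
  define bx where "bx = (\<lambda>x::real. real m * dt powr \<alpha> / (\<Xi> * x))"
  define G where "G = (\<lambda>k x. exp (bx x) * gen_expint (k + 1) (bx x))"
  define S where "S = (\<lambda>x. \<Sum>k<m. G k x)"
  have a: "a > 0" unfolding a_def using assms by simp
  have ln2: "ln 2 > (0::real)" by simp
  have bxpos: "bx x > 0" if "x > 0" for x
    using that assms unfolding bx_def by (auto intro!: divide_pos_pos)
  have bxa: "real m / bx x = a * x" if "x > 0" for x
    using that assms unfolding bx_def a_def by (simp add: powr_minus field_simps)
  have fnn: "0 \<le> f x" for x unfolding f_def by (rule nak_nonneg)
  have fz: "x \<le> 0 \<Longrightarrow> f x = 0" for x unfolding f_def by (rule nak_zero)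
  have Gnn: "0 \<le> G k x" for k x unfolding G_def by (simp add: gen_expint_nonneg)
  have Gm[measurable]: "G k \<in> borel_measurable borel" for k unfolding G_def bx_def by measurable
  have Sm[measurable]: "S \<in> borel_measurable borel" unfolding S_def by measurable
  have Xd: "distributed M lborel X (\<lambda>x. ennreal (f x))" unfolding X_def f_def by fact
  have Yd: "distributed M lborel Y (\<lambda>x. ennreal (f x))" unfolding Y_def f_def by fact
  have Xm[measurable]: "X \<in> borel_measurable M" using distributed_measurable[OF Xd] by simp
  have Ym[measurable]: "Y \<in> borel_measurable M" using distributed_measurable[OF Yd] by simp
  have sq: "(\<lambda>z::complex. (cmod z)\<^sup>2) \<in> measurable borel lborel" by simp
  have indep: "P.indep_var lborel X lborel Y"
    using P.indep_var_compose[OF assms(5) sq sq] unfolding X_def Y_def comp_def .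
  have joint: "distributed M (lborel \<Otimes>\<^sub>M lborel) (\<lambda>\<omega>. (X \<omega>, Y \<omega>)) (\<lambda>(x, y). ennreal (f x) * ennreal (f y))"
    by (rule P.distributed_joint_indep[OF lborel.sigma_finite_measure_axioms lborel.sigma_finite_measure_axioms Xd Yd indep])
  have Xnn: "0 \<le> X \<omega>" "0 \<le> Y \<omega>" for \<omega> unfolding X_def Y_def by auto

  have inner: "(\<integral>\<^sup>+y. ennreal (f x) * ennreal (f y) * ennreal (log 2 (1 + a * (x * y))) \<partial>lborel)
      = ennreal (f x * S x / ln 2)" for x
  proof (cases "x > 0")
    case True
    have "(\<integral>\<^sup>+y. ennreal (f x) * ennreal (f y) * ennreal (log 2 (1 + a * (x * y))) \<partial>lborel)
       = (\<integral>\<^sup>+y. ennreal (f x / ln 2) * ennreal (f y * ln (1 + real m * y / bx x)) \<partial>lborel)"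
    proof (rule nn_integral_cong)
      fix y :: real
      show "ennreal (f x) * ennreal (f y) * ennreal (log 2 (1 + a * (x * y))) = ennreal (f x / ln 2) * ennreal (f y * ln (1 + real m * y / bx x))"
      proof (cases "y > 0")
        case True
        have "real m * y / bx x = (real m / bx x) * y" by simp
        then have e: "real m * y / bx x = a * (x * y)" using bxa[OF \<open>x > 0\<close>] by simp
        have "0 \<le> log 2 (1 + a * (x * y))" using True \<open>x > 0\<close> a by (intro log2_nonneg) simp
        then show ?thesis unfolding e using fnn[of x] fnn[of y]
          by (simp add: ennreal_mult'[symmetric] log_def mult.assoc)
      qed (simp add: fz)
    qed
    also have "\<dots> = ennreal (f x / ln 2) * ennreal (S x)"
      unfolding f_def S_def G_def using K[OF m bxpos[OF True]]
      by (subst nn_integral_cmult) auto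
    also have "\<dots> = ennreal (f x * S x / ln 2)"
      using fnn[of x] by (simp add: ennreal_mult'[symmetric])
    finally show ?thesis .
  qed (simp add: fz)

  have Sle: "S x \<le> a * x" if "x > 0" for x
  proof -
    have "ennreal (S x) \<le> ennreal (real m / bx x)"
      unfolding S_def G_def using K[OF m bxpos[OF that]] B[OF m bxpos[OF that]] by simp
    then show ?thesis using bxa[OF that] a that by (simp add: ennreal_le_iff)
  qed

  define N where "N = (\<lambda>k. \<integral>\<^sup>+x. ennreal (f x * G k x / ln 2) \<partial>lborel)"
  define Tot where "Tot = (\<integral>\<^sup>+x. ennreal (f x * S x / ln 2) \<partial>lborel)"
  have Tot_fin: "Tot < top"
  proof -
    have "Tot \<le> (\<integral>\<^sup>+x. ennreal (a / ln 2) * ennreal (f x * x) \<partial>lborel)"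
      unfolding Tot_def
    proof (rule nn_integral_mono)
      fix x :: real
      show "ennreal (f x * S x / ln 2) \<le> ennreal (a / ln 2) * ennreal (f x * x)"
      proof (cases "x > 0")
        case True
        have "f x * S x \<le> f x * (a * x)" using Sle[OF True] fnn[of x] by (rule mult_left_mono)
        then have "f x * S x / ln 2 \<le> a / ln 2 * (f x * x)" using ln2 by (simp add: divide_right_mono field_simps)
        then show ?thesis using a ln2 by (simp add: ennreal_mult'[symmetric] ennreal_leI)
      qed (simp add: fz)
    qed
    also have "\<dots> = ennreal (a / ln 2)"
      using nak_moment[OF m] unfolding f_def by (subst nn_integral_cmult) auto
    finally show ?thesis using order.strict_trans1 by fastforce
  qed
  have N_fin: "N k < top" if "k < m" for k
  proof -
    have "N k \<le> Tot" unfolding N_def Tot_def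
    proof (rule nn_integral_mono)
      fix x :: real
      have "G k x \<le> S x" unfolding S_def using that Gnn by (intro member_le_sum) auto
      then have "f x * G k x / ln 2 \<le> f x * S x / ln 2" using fnn[of x] ln2
        by (intro divide_right_mono mult_left_mono) auto
      then show "ennreal (f x * G k x / ln 2) \<le> ennreal (f x * S x / ln 2)" by (rule ennreal_leI)
    qed
    then show ?thesis using Tot_fin by (simp add: order.strict_trans1)
  qed

  have E1: "P.expectation (\<lambda>\<omega>. log 2 (1 + a * (X \<omega> * Y \<omega>))) = enn2real (\<integral>\<^sup>+\<omega>. ennreal (log 2 (1 + a * (X \<omega> * Y \<omega>))) \<partial>M)"
    by (rule integral_eq_nn_integral) (use Xnn a in \<open>auto intro!: log2_nonneg\<close>)
  have "(\<integral>\<^sup>+\<omega>. ennreal (log 2 (1 + a * (X \<omega> * Y \<omega>))) \<partial>M)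
     = (\<integral>\<^sup>+p. (case p of (x, y) \<Rightarrow> ennreal (f x) * ennreal (f y)) * ennreal (log 2 (1 + a * (fst p * snd p))) \<partial>(lborel \<Otimes>\<^sub>M lborel))"
    by (subst distributed_nn_integral[OF joint]) auto
  also have "\<dots> = (\<integral>\<^sup>+x. \<integral>\<^sup>+y. ennreal (f x) * ennreal (f y) * ennreal (log 2 (1 + a * (x * y))) \<partial>lborel \<partial>lborel)"
    by (subst lborel.nn_integral_fst[symmetric]) (auto simp: f_def)
  also have "\<dots> = Tot" unfolding Tot_def inner ..
  also have "\<dots> = (\<integral>\<^sup>+x. (\<Sum>k<m. ennreal (f x * G k x / ln 2)) \<partial>lborel)"
    unfolding Tot_def S_def
    by (intro nn_integral_cong) (use fnn Gnn in \<open>auto simp: sum_ennreal sum_distrib_left sum_divide_distrib\<close>)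
  also have "\<dots> = (\<Sum>k<m. N k)" unfolding N_def by (rule nn_integral_sum) (auto simp: f_def)
  finally have E2: "(\<integral>\<^sup>+\<omega>. ennreal (log 2 (1 + a * (X \<omega> * Y \<omega>))) \<partial>M) = (\<Sum>k<m. N k)" .

  have R: "(LINT x:{0<..}|lborel. exp (bx x) * gen_expint (k + 1) (bx x) * f x) = ln 2 * enn2real (N k)" for k
  proof -
    have "(LINT x:{0<..}|lborel. exp (bx x) * gen_expint (k + 1) (bx x) * f x)
       = (LINT x|lborel. ln 2 * (f x * G k x / ln 2))"
      unfolding set_lebesgue_integral_def
      by (intro Bochner_Integration.integral_cong refl) (auto simp: indicator_def G_def fz not_less)
    also have "\<dots> = ln 2 * (LINT x|lborel. f x * G k x / ln 2)" by simp
    also have "(LINT x|lborel. f x * G k x / ln 2) = enn2real (N k)"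
      unfolding N_def by (rule integral_eq_nn_integral) (auto simp: f_def intro!: divide_nonneg_pos mult_nonneg_nonneg nak_nonneg Gnn)
    finally show ?thesis .
  qed

  have "\<delta> / (2 * T) * P.expectation (\<lambda>\<omega>. log 2 (1 + a * (X \<omega> * Y \<omega>)))
      = \<delta> / (2 * T) * (\<Sum>k<m. enn2real (N k))"
    unfolding E1 E2 using N_fin by (subst enn2real_sum) auto
  also have "\<dots> = (\<Sum>k<m. \<delta> / (2 * T * ln 2) * (LINT x:{0<..}|lborel. exp (bx x) * gen_expint (k + 1) (bx x) * f x))"
    unfolding R sum_distrib_left using ln2 by (intro sum.cong refl) (simp add: field_simps)
  finally show ?thesis unfolding X_def Y_def a_def bx_def f_def by (simp add: mult.assoc)
qed

end
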